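(* Let $n\ge3$ and $2\le k\le n-1$. An oriented cycle $\overrightarrow{C_n}$ for which $\{k\}$ is a distance set is $\{k\}$-antimagic if and only if it is unidirectional.
   Context: An oriented graph is a simple graph each of whose edges is given one direction (an arc $(u,v)$ goes from $u$ to $v$). For vertices $u,v$, $d(u,v)$ is the length of a shortest directed path from $u$ to $v$ ($d(u,u)=0$, $\infty$ if no path). A distance set of an oriented graph is a nonempty set $D$ of nonnegative integers each of which is a finite distance $d(u,v)$ for some pair of vertices. $N_D(v)=\{y : d(v,y)\in D\}$; for a bijection $f:V\to\{1,\dots,|V|\}$, $\omega_D(v)=\sum_{x\in N_D(v)}f(x)$ (empty sum $0$); $f$ is $D$-antimagic if distinct vertices have distinct $D$-weights, and the graph is $D$-antimagic if such an $f$ exists. An oriented cycle $\overrightarrow{C_n}$ is an orientation of the cycle on $v_1,\dots,v_n$. It is unidirectional if (up to relabeling) its arcs are $(v_i,v_{i+1})$, $1\le i\le n-1$, and $(v_n,v_1)$. *)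

theory Defs
  imports Main
begin

text \<open>A digraph is given by a vertex set V and an arc relation A (arcs assumed inside V).
  d(u,v) = m means: there is a directed walk of length m from u to v and none shorter.\<close>

definition is_dist :: "('a \<Rightarrow> 'a \<Rightarrow> bool) \<Rightarrow> 'a \<Rightarrow> 'a \<Rightarrow> nat \<Rightarrow> bool" where
  "is_dist A u v m \<longleftrightarrow> (A ^^ m) u v \<and> (\<forall>j<m. \<not> (A ^^ j) u v)"

definition distance_set :: "'a set \<Rightarrow> ('a \<Rightarrow> 'a \<Rightarrow> bool) \<Rightarrow> nat set \<Rightarrow> bool" where
  "distance_set V A D \<longleftrightarrow> D \<noteq> {} \<and> (\<forall>m\<in>D. \<exists>u\<in>V. \<exists>v\<in>V. is_dist A u v m)"

definition D_nbhd :: "'a set \<Rightarrow> ('a \<Rightarrow> 'a \<Rightarrow> bool) \<Rightarrow> nat set \<Rightarrow> 'a \<Rightarrow> 'a set" where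
  "D_nbhd V A D v = {y \<in> V. \<exists>m\<in>D. is_dist A v y m}"

definition D_weight :: "'a set \<Rightarrow> ('a \<Rightarrow> 'a \<Rightarrow> bool) \<Rightarrow> nat set \<Rightarrow> ('a \<Rightarrow> nat) \<Rightarrow> 'a \<Rightarrow> nat" where
  "D_weight V A D f v = (\<Sum>x\<in>D_nbhd V A D v. f x)"

definition D_antimagic_labeling :: "'a set \<Rightarrow> ('a \<Rightarrow> 'a \<Rightarrow> bool) \<Rightarrow> nat set \<Rightarrow> ('a \<Rightarrow> nat) \<Rightarrow> bool" where
  "D_antimagic_labeling V A D f \<longleftrightarrow> bij_betw f V {1..card V} \<and> inj_on (D_weight V A D f) V"

definition D_antimagic :: "'a set \<Rightarrow> ('a \<Rightarrow> 'a \<Rightarrow> bool) \<Rightarrow> nat set \<Rightarrow> bool" where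
  "D_antimagic V A D \<longleftrightarrow> (\<exists>f. D_antimagic_labeling V A D f)"

text \<open>Oriented cycle on vertices 0,...,n-1 (edges {i, (i+1) mod n}); the edge {i,(i+1) mod n}
  is oriented i -> (i+1) mod n if ori i, and (i+1) mod n -> i otherwise.
  Every orientation of C_n arises this way.\<close>

definition cyc_arc :: "nat \<Rightarrow> (nat \<Rightarrow> bool) \<Rightarrow> nat \<Rightarrow> nat \<Rightarrow> bool" where
  "cyc_arc n ori u v \<longleftrightarrow> u < n \<and> v < n \<and>
     ((v = Suc u mod n \<and> ori u) \<or> (u = Suc v mod n \<and> \<not> ori v))"

definition unidirectional :: "nat \<Rightarrow> 'a set \<Rightarrow> ('a \<Rightarrow> 'a \<Rightarrow> bool) \<Rightarrow> bool" where
  "unidirectional n V A \<longleftrightarrow> (\<exists>p. bij_betw p {0..<n} V \<and>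
     (\<forall>u v. A u v \<longleftrightarrow> (\<exists>i<n. u = p i \<and> v = p (Suc i mod n))))"

end

theory Submission
  imports Defs "HOL-Number_Theory.Cong"
begin

lemma modinj: "(a::nat) < n \<Longrightarrow> b < n \<Longrightarrow> (x + a) mod n = (x + b) mod n \<Longrightarrow> a = b"
proof -
  assume h: "a < n" "b < n" "(x + a) mod n = (x + b) mod n"
  have "a mod n = b mod n" using h(3) using cong_add_lcancel_nat[of x a b n] by (simp add: cong_def)
  then show "a = b" using h by simp
qed

lemma ivt: "o' a \<Longrightarrow> \<not> o' b \<Longrightarrow> (a::nat) < b \<Longrightarrow> \<exists>c. a \<le> c \<and> c < b \<and> o' c \<and> \<not> o' (Suc c)"
proof (induction b)
  case 0 then show ?case by simp
next
  case (Suc b)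
  show ?case
  proof (cases "o' b")
    case True then show ?thesis using Suc by (intro exI[of _ b]) auto
  next
    case False
    then have "a < b" using Suc by (metis less_SucE)
    then show ?thesis using Suc False by (meson less_Suc_eq)
  qed
qed

lemma noW_empty:
  assumes "\<forall>y. \<not> (A ^^ 2) v y" "2 \<le> k"
  shows "D_nbhd V A {k} v = {}"
proof -
  have "\<not> (A ^^ k) v y" for y
  proof
    assume "(A ^^ k) v y"
    then have "(A ^^ (2 + (k-2))) v y" using assms(2) by (metis le_add_diff_inverse)
    then have "(A ^^ 2 OO A ^^ (k-2)) v y" by (simp only: relpowp_add)
    then show False using assms(1) by blast
  qed
  then show ?thesis by (auto simp: D_nbhd_def is_dist_def)
qed


lemma uni_pow:
  assumes bij: "bij_betw p {0..<n} V"
    and A: "\<forall>u v. A u v \<longleftrightarrow> (\<exists>i<n. u = p i \<and> v = p (Suc i mod n))"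
    and i: "i < n"
  shows "(A ^^ m) (p i) y \<longleftrightarrow> y = p ((i + m) mod n)"
proof (induction m arbitrary: y)
  case 0 then show ?case using i by auto
next
  case (Suc m)
  have inj: "inj_on p {0..<n}" using bij bij_betw_def by blast
  have "(A ^^ Suc m) (p i) y \<longleftrightarrow> A (p ((i + m) mod n)) y"
    using Suc by (auto simp: relpowp_Suc_right)
  also have "\<dots> \<longleftrightarrow> y = p (Suc ((i + m) mod n) mod n)"
  proof
    assume "A (p ((i + m) mod n)) y"
    then obtain j where j: "j < n" "p ((i + m) mod n) = p j" "y = p (Suc j mod n)" using A by blast
    have "j = (i + m) mod n" using inj j i by (metis atLeastLessThan_iff inj_on_eq_iff mod_less_divisor le0 not_less0 neq0_conv less_nat_zero_code gr_implies_not0)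
    then show "y = p (Suc ((i + m) mod n) mod n)" using j by simp
  next
    assume "y = p (Suc ((i + m) mod n) mod n)"
    then show "A (p ((i + m) mod n)) y" using A i by (metis mod_less_divisor gr_implies_not0 neq0_conv)
  qed
  also have "\<dots> \<longleftrightarrow> y = p ((i + Suc m) mod n)" by (simp add: mod_Suc_eq)
  finally show ?case .
qed

lemma uni_antimagic:
  assumes u: "unidirectional n {0..<n} A" and k: "k < n"
  shows "D_antimagic {0..<n} A {k}"
proof -
  obtain p where bij: "bij_betw p {0..<n} {0..<n}"
    and A: "\<forall>u v. A u v \<longleftrightarrow> (\<exists>i<n. u = p i \<and> v = p (Suc i mod n))"
    using u unfolding unidirectional_def by blast
  have inj: "inj_on p {0..<n}" using bij bij_betw_def by blast
  have pin: "i < n \<Longrightarrow> p i < n" for i using bij by (auto simp: bij_betw_def)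
  have nb: "D_nbhd {0..<n} A {k} (p i) = {p ((i + k) mod n)}" if i: "i < n" for i
  proof -
    have "is_dist A (p i) y k \<longleftrightarrow> y = p ((i + k) mod n)" for y
    proof -
      have neq: "p ((i + j) mod n) \<noteq> p ((i + k) mod n)" if "j < k" for j
      proof
        assume "p ((i + j) mod n) = p ((i + k) mod n)"
        then have "(i + j) mod n = (i + k) mod n" using inj i
          by (simp add: inj_on_eq_iff)
        then have "j = k" using modinj[of j n k i] that k by simp
        then show False using that by simp
      qed
      then show ?thesis unfolding is_dist_def uni_pow[OF bij A i] by (metis neq)
    qed
    then show ?thesis unfolding D_nbhd_def using i pin by auto
  qed
  define f where "f = (\<lambda>x::nat. x + 1)"
  have "bij_betw f {0..<n} {1..card {0..<n}}"
    unfolding f_def bij_betw_def by (auto simp: image_iff intro!: exI[of _ "x - 1" for x])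
  moreover have "inj_on (D_weight {0..<n} A {k} f) {0..<n}"
  proof (rule inj_onI)
    fix x y assume x: "x \<in> {0..<n}" and y: "y \<in> {0..<n}"
      and w: "D_weight {0..<n} A {k} f x = D_weight {0..<n} A {k} f y"
    obtain i where i: "i < n" "x = p i" using x bij unfolding bij_betw_def by (metis atLeastLessThan_iff imageE)
    obtain j where j: "j < n" "y = p j" using y bij unfolding bij_betw_def by (metis atLeastLessThan_iff imageE)
    have "p ((i + k) mod n) = p ((j + k) mod n)"
      using w nb[OF i(1)] nb[OF j(1)] i j by (simp add: D_weight_def f_def)
    then have "(i + k) mod n = (j + k) mod n" using inj i j by (simp add: inj_on_eq_iff)
    then have "i = j" using modinj[of i n j k] i j by (simp add: add.commute)
    then show "x = y" using i j by simp
  qed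
  ultimately show ?thesis unfolding D_antimagic_def D_antimagic_labeling_def by blast
qed


lemma sucmod: "x < n \<Longrightarrow> Suc x mod n = (if Suc x = n then 0 else Suc x)"
  by auto

lemma const_true_uni:
  assumes "n \<ge> 3" "\<forall>i<n. ori i"
  shows "unidirectional n {0..<n} (cyc_arc n ori)"
  unfolding unidirectional_def
proof (intro exI[of _ id] conjI allI)
  show "bij_betw id {0..<n} {0..<n}" by simp
  fix u v
  show "cyc_arc n ori u v \<longleftrightarrow> (\<exists>i<n. u = id i \<and> v = id (Suc i mod n))"
    using assms unfolding cyc_arc_def by auto
qed

lemma const_false_uni:
  assumes n: "n \<ge> 3" and f: "\<forall>i<n. \<not> ori i"
  shows "unidirectional n {0..<n} (cyc_arc n ori)"
  unfolding unidirectional_def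
proof (intro exI[of _ "\<lambda>i. n - 1 - i"] conjI allI)
  show "bij_betw (\<lambda>i. n - 1 - i) {0..<n} {0..<n}"
    by (rule bij_betw_byWitness[where f'="\<lambda>i. n - 1 - i"]) auto
  fix u v
  show "cyc_arc n ori u v \<longleftrightarrow> (\<exists>i<n. u = n - 1 - i \<and> v = n - 1 - (Suc i mod n))"
  proof
    assume "cyc_arc n ori u v"
    then have uv: "u < n" "v < n" "u = Suc v mod n" using f unfolding cyc_arc_def by auto
    show "\<exists>i<n. u = n - 1 - i \<and> v = n - 1 - (Suc i mod n)"
    proof (cases "Suc v = n")
      case True
      then show ?thesis using uv n by (intro exI[of _ "n - 1"]) auto
    next
      case False
      then show ?thesis using uv n by (intro exI[of _ "n - 1 - u"]) (auto simp: sucmod)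
    qed
  next
    assume "\<exists>i<n. u = n - 1 - i \<and> v = n - 1 - (Suc i mod n)"
    then obtain i where i: "i < n" "u = n - 1 - i" "v = n - 1 - (Suc i mod n)" by blast
    show "cyc_arc n ori u v"
    proof (cases "Suc i = n")
      case True
      then show ?thesis using i n f unfolding cyc_arc_def by auto
    next
      case False
      then show ?thesis using i n f unfolding cyc_arc_def by (auto simp: sucmod)
    qed
  qed
qed

lemma sink:
  assumes "i < n" "ori i" "\<not> ori (Suc i mod n)"
  shows "\<not> cyc_arc n ori (Suc i mod n) v"
proof
  assume "cyc_arc n ori (Suc i mod n) v"
  then have "v < n" "Suc i mod n = Suc v mod n" "\<not> ori v" using assms(3) unfolding cyc_arc_def by auto
  then have "v = i" using modinj[of v n i 1] assms(1) by simp
  then show False using assms \<open>\<not> ori v\<close> by simp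
qed

lemma noW_of:
  assumes "\<forall>w. A v w \<longrightarrow> (\<forall>y. \<not> A w y)"
  shows "\<forall>y. \<not> (A ^^ 2) v y"
  using assms by (auto simp: numeral_2_eq_2 relpowp_Suc_right)

lemma two_empty:
  assumes n: "n \<ge> 3" and nu: "\<not> unidirectional n {0..<n} (cyc_arc n ori)"
  shows "\<exists>x1 x2. x1 < n \<and> x2 < n \<and> x1 \<noteq> x2 \<and> (\<forall>y. \<not> (cyc_arc n ori ^^ 2) x1 y)
     \<and> (\<forall>y. \<not> (cyc_arc n ori ^^ 2) x2 y)"
proof -
  let ?A = "cyc_arc n ori"
  obtain a where a: "a < n" "ori a" using const_false_uni[OF n] nu by blast
  obtain b where b: "b < n" "\<not> ori b" using const_true_uni[OF n] nu by blast
  obtain i where i: "i < n" "ori i" "\<not> ori (Suc i mod n)"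
  proof (cases "a < b")
    case True
    obtain c where c: "a \<le> c" "c < b" "ori (c mod n)" "\<not> ori (Suc c mod n)"
      using ivt[of "\<lambda>j. ori (j mod n)" a b] a b True by auto
    then show ?thesis using that[of "c mod n"] n by (simp add: mod_Suc_eq)
  next
    case False
    have "ori (a mod n)" "\<not> ori ((b + n) mod n)" "a < b + n" using a b False by auto
    then obtain c where c: "ori (c mod n)" "\<not> ori (Suc c mod n)"
      using ivt[of "\<lambda>j. ori (j mod n)" a "b + n"] by auto
    then show ?thesis using that[of "c mod n"] n by (simp add: mod_Suc_eq)
  qed
  define s where "s = Suc i mod n"
  have s: "s < n" using i s_def by simp
  have sinks: "\<forall>y. \<not> ?A s y" using sink[OF i] s_def by simp
  have nWs: "\<forall>y. \<not> (?A ^^ 2) s y" using noW_of sinks by (metis)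
  define h where "h = (i + (n - 1)) mod n"
  have h: "h < n" "Suc h mod n = i" using n i unfolding h_def by (auto simp: mod_Suc_eq)
  define w where "w = Suc s mod n"
  have w: "w < n" "w = (i + 2) mod n" using n unfolding w_def s_def by (auto simp: mod_Suc_eq)
  have sne: "x \<noteq> Suc x mod n" if "x < n" for x
    using modinj[of 0 n 1 x] n that by auto
  show ?thesis
  proof (cases "ori h")
    case True
    have "\<forall>v. ?A i v \<longrightarrow> v = s"
    proof (intro allI impI)
      fix v assume av: "?A i v"
      show "v = s"
      proof (rule ccontr)
        assume "v \<noteq> s"
        then have v: "i = Suc v mod n" "\<not> ori v" "v < n" using av unfolding cyc_arc_def s_def by auto
        have "(1 + v) mod n = (1 + h) mod n" using v h by simp
        then have "v = h" using modinj[of v n h 1] v h by simp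
        then show False using True v by simp
      qed
    qed
    then have "\<forall>y. \<not> (?A ^^ 2) i y" using noW_of sinks by metis
    then show ?thesis using nWs i s sne[of i] s_def by blast
  next
    case hF: False
    show ?thesis
    proof (cases "ori w")
      case False
      have "\<forall>v. ?A w v \<longrightarrow> v = s"
      proof (intro allI impI)
        fix v assume av: "?A w v"
        then have v: "w = Suc v mod n" "v < n" using False unfolding cyc_arc_def by auto
        have "(1 + v) mod n = (1 + s) mod n" using v w_def by simp
        then show "v = s" using modinj[of v n s 1] v s by simp
      qed
      then have "\<forall>y. \<not> (?A ^^ 2) w y" using noW_of sinks by metis
      then show ?thesis using nWs w s sne[of s] w_def by metis
    next
      case True
      have n4: "n \<noteq> 3"
      proof
        assume "n = 3"
        then have "h = w" unfolding h_def w(2) by simp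
        then show False using True hF by simp
      qed
      have "ori ((i + 2) mod n)" "\<not> ori ((i + (n - 1)) mod n)" "i + 2 < i + (n - 1)"
        using True hF w h_def n n4 by auto
      then have "\<exists>c. i + 2 \<le> c \<and> c < i + (n - 1) \<and> ori (c mod n) \<and> \<not> ori (Suc c mod n)"
        using ivt[of "\<lambda>j. ori (j mod n)" "i + 2" "i + (n - 1)"] by blast
      then obtain c where c: "i + 2 \<le> c" "c < i + (n - 1)" "ori (c mod n)" "\<not> ori (Suc c mod n)"
        by blast
      define s' where "s' = Suc c mod n"
      have s': "s' < n" using n s'_def by simp
      have "\<not> ori (Suc (c mod n) mod n)" using c by (simp add: mod_Suc_eq)
      then have "\<forall>y. \<not> ?A s' y" using sink[of "c mod n" n ori] c n unfolding s'_def
        by (simp add: mod_Suc_eq)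
      then have nWs': "\<forall>y. \<not> (?A ^^ 2) s' y" using noW_of by metis
      have "s' \<noteq> s"
      proof
        assume "s' = s"
        then have "(Suc i + (c - i)) mod n = (Suc i + 0) mod n" unfolding s'_def s_def using c by simp
        moreover have "c - i < n" using c by linarith
        moreover have "(0::nat) < n" using n by simp
        ultimately have "c - i = 0" using modinj[of "c - i" n 0 "Suc i"] by simp
        then show False using c by simp
      qed
      then show ?thesis using nWs nWs' s s' by blast
    qed
  qed
qed

theorem mainTheorem9:
  fixes n k :: nat and ori :: "nat \<Rightarrow> bool"
  assumes "n \<ge> 3" and "2 \<le> k" and "k \<le> n - 1"
    and "distance_set {0..<n} (cyc_arc n ori) {k}"
  shows "D_antimagic {0..<n} (cyc_arc n ori) {k} \<longleftrightarrow> unidirectional n {0..<n} (cyc_arc n ori)"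
proof
  assume am: "D_antimagic {0..<n} (cyc_arc n ori) {k}"
  show "unidirectional n {0..<n} (cyc_arc n ori)"
  proof (rule ccontr)
    assume "\<not> unidirectional n {0..<n} (cyc_arc n ori)"
    then obtain x1 x2 where x: "x1 < n" "x2 < n" "x1 \<noteq> x2"
      "\<forall>y. \<not> (cyc_arc n ori ^^ 2) x1 y" "\<forall>y. \<not> (cyc_arc n ori ^^ 2) x2 y"
      using two_empty[OF assms(1)] by metis
    obtain f where f: "D_antimagic_labeling {0..<n} (cyc_arc n ori) {k} f"
      using am unfolding D_antimagic_def by blast
    have "D_weight {0..<n} (cyc_arc n ori) {k} f x1 = D_weight {0..<n} (cyc_arc n ori) {k} f x2"
      unfolding D_weight_def using noW_empty[OF x(4) assms(2)] noW_empty[OF x(5) assms(2)] by simp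
    moreover have "inj_on (D_weight {0..<n} (cyc_arc n ori) {k} f) {0..<n}"
      using f unfolding D_antimagic_labeling_def by blast
    ultimately have "x1 = x2" using x(1,2) by (simp add: inj_on_eq_iff)
    then show False using x(3) by simp
  qed
next
  assume "unidirectional n {0..<n} (cyc_arc n ori)"
  then show "D_antimagic {0..<n} (cyc_arc n ori) {k}"
    by (rule uni_antimagic) (use assms in linarith)
qed

end
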